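(* Let $A$ be a semiprime $2$-torsion free associative algebra and let $Q$ be a subalgebra of $Q_s(A)$ containing $A$. Then $A^{(-)}/Z(A)$ and $Q^{(-)}/Z(Q)$ are semiprime Lie algebras, the natural map $A^{(-)}/Z(A)\to Q^{(-)}/Z(Q)$ is injective, and (identifying $A^{(-)}/Z(A)$ with its image) $Q^{(-)}/Z(Q)$ is a Lie algebra of quotients of $A^{(-)}/Z(A)$.
   Context: Algebras are over a commutative unital ring $\Phi$; associative algebras need not be unital. For an associative algebra $A$, $A^{(-)}$ is the Lie algebra with the same module and bracket $[x,y]=xy-yx$; $Z(A)$ is the center. $A$ is $2$-torsion free if $2x=0$ implies $x=0$. For semiprime $A$, $Q^l_{\max}(A)$ denotes the maximal left (Utumi) quotient algebra and $Q_s(A)$ the Martindale symmetric algebra of quotients, which consists of those $q\in Q^l_{\max}(A)$ for which there is an essential ideal $I$ of $A$ with $Iq+qI\subseteq A$. A Lie algebra $L$ is semiprime if $[I,I]\neq 0$ for each nonzero ideal $I$. For a Lie subalgebra $L\subseteq Q$, $Q$ is an algebra of quotients of $L$ if for every nonzero $q\in Q$ there is an ideal $I$ of $L$ with $\mathrm{Ann}_L(I)=0$ (where $\mathrm{Ann}_L(I)=\{a\in L:[a,I]=0\}$) and $0\ne[I,q]\subseteq L$. *)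

theory Defs
  imports Main
begin

text \<open>The ambient type 'a carries a (not necessarily unital) ring structure; the
scalar action of the commutative unital ring 'r (playing the role of Phi) is smult.\<close>

definition is_algebra :: "('r::comm_ring_1 \<Rightarrow> 'a::ring \<Rightarrow> 'a) \<Rightarrow> bool" where
  "is_algebra smult \<longleftrightarrow>
     (\<forall>r x y. smult r (x + y) = smult r x + smult r y) \<and>
     (\<forall>r s x. smult (r + s) x = smult r x + smult s x) \<and>
     (\<forall>r s x. smult (r * s) x = smult r (smult s x)) \<and>
     (\<forall>x. smult 1 x = x) \<and>
     (\<forall>r x y. smult r (x * y) = smult r x * y) \<and>
     (\<forall>r x y. smult r (x * y) = x * smult r y)"

definition subalgebra :: "('r::comm_ring_1 \<Rightarrow> 'a::ring \<Rightarrow> 'a) \<Rightarrow> 'a set \<Rightarrow> bool" where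
  "subalgebra smult S \<longleftrightarrow> 0 \<in> S \<and>
     (\<forall>x\<in>S. \<forall>y\<in>S. x + y \<in> S \<and> x * y \<in> S) \<and> (\<forall>x\<in>S. - x \<in> S) \<and>
     (\<forall>r. \<forall>x\<in>S. smult r x \<in> S)"

definition alg_ideal :: "('r::comm_ring_1 \<Rightarrow> 'a::ring \<Rightarrow> 'a) \<Rightarrow> 'a set \<Rightarrow> 'a set \<Rightarrow> bool" where
  "alg_ideal smult A I \<longleftrightarrow> I \<subseteq> A \<and> 0 \<in> I \<and>
     (\<forall>x\<in>I. \<forall>y\<in>I. x + y \<in> I) \<and> (\<forall>x\<in>I. - x \<in> I) \<and> (\<forall>r. \<forall>x\<in>I. smult r x \<in> I) \<and>
     (\<forall>a\<in>A. \<forall>x\<in>I. a * x \<in> I \<and> x * a \<in> I)"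

definition left_ideal :: "('r::comm_ring_1 \<Rightarrow> 'a::ring \<Rightarrow> 'a) \<Rightarrow> 'a set \<Rightarrow> 'a set \<Rightarrow> bool" where
  "left_ideal smult A I \<longleftrightarrow> I \<subseteq> A \<and> 0 \<in> I \<and>
     (\<forall>x\<in>I. \<forall>y\<in>I. x + y \<in> I) \<and> (\<forall>x\<in>I. - x \<in> I) \<and> (\<forall>r. \<forall>x\<in>I. smult r x \<in> I) \<and>
     (\<forall>a\<in>A. \<forall>x\<in>I. a * x \<in> I)"

text \<open>A is semiprime: every ideal I with I^2 = 0 is zero (I^2 is spanned by the
products xy, x,y in I).\<close>
definition semiprime_alg :: "('r::comm_ring_1 \<Rightarrow> 'a::ring \<Rightarrow> 'a) \<Rightarrow> 'a set \<Rightarrow> bool" where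
  "semiprime_alg smult A \<longleftrightarrow>
     (\<forall>I. alg_ideal smult A I \<and> (\<forall>x\<in>I. \<forall>y\<in>I. x * y = 0) \<longrightarrow> I = {0})"

definition two_torsion_free :: "'a::ring set \<Rightarrow> bool" where
  "two_torsion_free A \<longleftrightarrow> (\<forall>x\<in>A. x + x = 0 \<longrightarrow> x = 0)"

definition center :: "'a::ring set \<Rightarrow> 'a set" where
  "center A = {z \<in> A. \<forall>x\<in>A. z * x = x * z}"

definition essential_ideal :: "('r::comm_ring_1 \<Rightarrow> 'a::ring \<Rightarrow> 'a) \<Rightarrow> 'a set \<Rightarrow> 'a set \<Rightarrow> bool" where
  "essential_ideal smult A I \<longleftrightarrow> alg_ideal smult A I \<and>
     (\<forall>J. alg_ideal smult A J \<and> J \<noteq> {0} \<longrightarrow> I \<inter> J \<noteq> {0})"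

definition dense_left_ideal :: "('r::comm_ring_1 \<Rightarrow> 'a::ring \<Rightarrow> 'a) \<Rightarrow> 'a set \<Rightarrow> 'a set \<Rightarrow> bool" where
  "dense_left_ideal smult A I \<longleftrightarrow> left_ideal smult A I \<and>
     (\<forall>p\<in>A. \<forall>q\<in>A. p \<noteq> 0 \<longrightarrow> (\<exists>a\<in>A. a * p \<noteq> 0 \<and> a * q \<in> I))"

definition left_module_hom :: "('r::comm_ring_1 \<Rightarrow> 'a::ring \<Rightarrow> 'a) \<Rightarrow> 'a set \<Rightarrow> 'a set \<Rightarrow> ('a \<Rightarrow> 'a) \<Rightarrow> bool" where
  "left_module_hom smult A I f \<longleftrightarrow> (\<forall>x\<in>I. f x \<in> A) \<and>
     (\<forall>x\<in>I. \<forall>y\<in>I. f (x + y) = f x + f y) \<and>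
     (\<forall>r. \<forall>x\<in>I. f (smult r x) = smult r (f x)) \<and>
     (\<forall>a\<in>A. \<forall>x\<in>I. f (a * x) = a * f x)"

text \<open>U is (a copy of) the maximal left quotient algebra Q^l_max(A), via Utumi's
characterization.\<close>
definition is_Qmax_left :: "('r::comm_ring_1 \<Rightarrow> 'a::ring \<Rightarrow> 'a) \<Rightarrow> 'a set \<Rightarrow> 'a set \<Rightarrow> bool" where
  "is_Qmax_left smult A U \<longleftrightarrow> subalgebra smult U \<and> subalgebra smult A \<and> A \<subseteq> U \<and>
     (\<forall>q\<in>U. \<exists>I. dense_left_ideal smult A I \<and> (\<forall>x\<in>I. x * q \<in> A)) \<and>
     (\<forall>q\<in>U. \<forall>I. dense_left_ideal smult A I \<and> (\<forall>x\<in>I. x * q = 0) \<longrightarrow> q = 0) \<and>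
     (\<forall>I f. dense_left_ideal smult A I \<and> left_module_hom smult A I f \<longrightarrow>
        (\<exists>q\<in>U. \<forall>x\<in>I. f x = x * q))"

definition Qs :: "('r::comm_ring_1 \<Rightarrow> 'a::ring \<Rightarrow> 'a) \<Rightarrow> 'a set \<Rightarrow> 'a set \<Rightarrow> 'a set" where
  "Qs smult A U = {q \<in> U. \<exists>I. essential_ideal smult A I \<and> (\<forall>x\<in>I. x * q \<in> A \<and> q * x \<in> A)}"

record ('r, 'b) lie_alg =
  lcar :: "'b set"
  lzero :: 'b
  ladd :: "'b \<Rightarrow> 'b \<Rightarrow> 'b"
  lsmult :: "'r \<Rightarrow> 'b \<Rightarrow> 'b"
  lbr :: "'b \<Rightarrow> 'b \<Rightarrow> 'b"

definition lie_algebra :: "('r::comm_ring_1, 'b) lie_alg \<Rightarrow> bool" where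
  "lie_algebra L \<longleftrightarrow> (let C = lcar L; z = lzero L; p = ladd L; s = lsmult L; b = lbr L in
     z \<in> C \<and> (\<forall>x\<in>C. \<forall>y\<in>C. p x y \<in> C \<and> b x y \<in> C) \<and> (\<forall>r. \<forall>x\<in>C. s r x \<in> C) \<and>
     (\<forall>x\<in>C. \<forall>y\<in>C. \<forall>w\<in>C. p (p x y) w = p x (p y w)) \<and>
     (\<forall>x\<in>C. \<forall>y\<in>C. p x y = p y x) \<and>
     (\<forall>x\<in>C. p x z = x) \<and> (\<forall>x\<in>C. \<exists>y\<in>C. p x y = z) \<and>
     (\<forall>r. \<forall>x\<in>C. \<forall>y\<in>C. s r (p x y) = p (s r x) (s r y)) \<and>
     (\<forall>r t. \<forall>x\<in>C. s (r + t) x = p (s r x) (s t x)) \<and>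
     (\<forall>r t. \<forall>x\<in>C. s (r * t) x = s r (s t x)) \<and>
     (\<forall>x\<in>C. s 1 x = x) \<and>
     (\<forall>x\<in>C. \<forall>y\<in>C. \<forall>w\<in>C. b (p x y) w = p (b x w) (b y w) \<and> b w (p x y) = p (b w x) (b w y)) \<and>
     (\<forall>r. \<forall>x\<in>C. \<forall>y\<in>C. b (s r x) y = s r (b x y) \<and> b x (s r y) = s r (b x y)) \<and>
     (\<forall>x\<in>C. b x x = z) \<and>
     (\<forall>x\<in>C. \<forall>y\<in>C. \<forall>w\<in>C. p (p (b x (b y w)) (b y (b w x))) (b w (b x y)) = z))"

definition lie_ideal :: "('r::comm_ring_1, 'b) lie_alg \<Rightarrow> 'b set \<Rightarrow> bool" where
  "lie_ideal L I \<longleftrightarrow> I \<subseteq> lcar L \<and> lzero L \<in> I \<and>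
     (\<forall>x\<in>I. \<forall>y\<in>I. ladd L x y \<in> I) \<and> (\<forall>r. \<forall>x\<in>I. lsmult L r x \<in> I) \<and>
     (\<forall>x\<in>lcar L. \<forall>y\<in>I. lbr L x y \<in> I)"

text \<open>Semiprime: [I, I] \<noteq> 0 for every nonzero ideal I ([I,I] is spanned by the brackets).\<close>
definition lie_semiprime :: "('r::comm_ring_1, 'b) lie_alg \<Rightarrow> bool" where
  "lie_semiprime L \<longleftrightarrow>
     (\<forall>I. lie_ideal L I \<and> I \<noteq> {lzero L} \<longrightarrow> (\<exists>x\<in>I. \<exists>y\<in>I. lbr L x y \<noteq> lzero L))"

definition lie_ann :: "('r, 'b) lie_alg \<Rightarrow> 'b set \<Rightarrow> 'b set" where
  "lie_ann L I = {a \<in> lcar L. \<forall>x\<in>I. lbr L a x = lzero L}"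

text \<open>Q is an algebra of quotients of L, where L is identified with its image under
the embedding phi.\<close>
definition lie_algebra_of_quotients ::
  "('r::comm_ring_1, 'b) lie_alg \<Rightarrow> ('r, 'c) lie_alg \<Rightarrow> ('b \<Rightarrow> 'c) \<Rightarrow> bool" where
  "lie_algebra_of_quotients L Q phi \<longleftrightarrow>
     (\<forall>q\<in>lcar Q. q \<noteq> lzero Q \<longrightarrow>
        (\<exists>I. lie_ideal L I \<and> lie_ann L I = {lzero L} \<and>
             (\<forall>x\<in>I. lbr Q (phi x) q \<in> phi ` lcar L) \<and>
             (\<exists>x\<in>I. lbr Q (phi x) q \<noteq> lzero Q)))"

definition minus_lie :: "('r::comm_ring_1 \<Rightarrow> 'a::ring \<Rightarrow> 'a) \<Rightarrow> 'a set \<Rightarrow> ('r, 'a) lie_alg" where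
  "minus_lie smult A = \<lparr>lcar = A, lzero = 0, ladd = (+), lsmult = smult,
                        lbr = (\<lambda>x y. x * y - y * x)\<rparr>"

definition lcoset :: "('r, 'b) lie_alg \<Rightarrow> 'b set \<Rightarrow> 'b \<Rightarrow> 'b set" where
  "lcoset L Z x = (\<lambda>z. ladd L x z) ` Z"

definition rep :: "'b set \<Rightarrow> 'b" where
  "rep X = (SOME x. x \<in> X)"

definition lie_quot :: "('r, 'b) lie_alg \<Rightarrow> 'b set \<Rightarrow> ('r, 'b set) lie_alg" where
  "lie_quot L Z = \<lparr>lcar = lcoset L Z ` lcar L, lzero = lcoset L Z (lzero L),
     ladd = (\<lambda>X Y. lcoset L Z (ladd L (rep X) (rep Y))),
     lsmult = (\<lambda>r X. lcoset L Z (lsmult L r (rep X))),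
     lbr = (\<lambda>X Y. lcoset L Z (lbr L (rep X) (rep Y)))\<rparr>"

definition minus_mod_center :: "('r::comm_ring_1 \<Rightarrow> 'a::ring \<Rightarrow> 'a) \<Rightarrow> 'a set \<Rightarrow> ('r, 'a set) lie_alg" where
  "minus_mod_center smult A = lie_quot (minus_lie smult A) (center A)"

definition natural_map :: "('r::comm_ring_1 \<Rightarrow> 'a::ring \<Rightarrow> 'a) \<Rightarrow> 'a set \<Rightarrow> 'a set \<Rightarrow> 'a set" where
  "natural_map smult Q X = lcoset (minus_lie smult Q) (center Q) (rep X)"

end

theory Submission
  imports Defs
begin


lemma alg_facts:
  assumes "is_algebra smult"
  shows "smult r 0 = 0" "smult r (- x) = - smult r x" "smult r (x - y) = smult r x - smult r y"
    "smult r (x * y) = smult r x * y" "smult r (x * y) = x * smult r y"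
    "smult r (x + y) = smult r x + smult r y"
    "smult (r + t) x = smult r x + smult t x" "smult (r * t) x = smult r (smult t x)"
    "smult 1 x = x"
proof -
  note h = assms[unfolded is_algebra_def]
  have add: "\<And>x y. smult r (x + y) = smult r x + smult r y" using h[THEN conjunct1] by simp
  show "smult r (x * y) = smult r x * y"
    using h[THEN conjunct2, THEN conjunct2, THEN conjunct2, THEN conjunct2, THEN conjunct1] by simp
  show "smult r (x * y) = x * smult r y"
    using h[THEN conjunct2, THEN conjunct2, THEN conjunct2, THEN conjunct2, THEN conjunct2] by simp
  show "smult r (x + y) = smult r x + smult r y" by (rule add)
  show "smult (r + t) x = smult r x + smult t x"
    using h[THEN conjunct2, THEN conjunct1] by simp
  show "smult (r * t) x = smult r (smult t x)"
    using h[THEN conjunct2, THEN conjunct2, THEN conjunct1] by simp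
  show "smult 1 x = x"
    using h[THEN conjunct2, THEN conjunct2, THEN conjunct2, THEN conjunct1] by simp
  have "smult r (0 + 0) = smult r 0 + smult r 0" by (rule add)
  then show z: "smult r 0 = 0" by simp
  have n: "smult r (- w) = - smult r w" for w
  proof -
    have "smult r (w + - w) = smult r w + smult r (- w)" by (rule add)
    then have "smult r w + smult r (- w) = 0" using z by simp
    then show ?thesis by (simp add: eq_neg_iff_add_eq_0 add.commute)
  qed
  then show "smult r (- x) = - smult r x" .
  show "smult r (x - y) = smult r x - smult r y"
    using add[of x "- y"] n[of y] by simp
qed
locale salg =
  fixes smult :: "'r::comm_ring_1 \<Rightarrow> 'a::ring \<Rightarrow> 'a" and S :: "'a set"
  assumes alg: "is_algebra smult" and sub: "subalgebra smult S"
begin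

lemmas af = alg_facts[OF alg]

lemma S_0: "0 \<in> S" and S_add: "x \<in> S \<Longrightarrow> y \<in> S \<Longrightarrow> x + y \<in> S"
  and S_mult: "x \<in> S \<Longrightarrow> y \<in> S \<Longrightarrow> x * y \<in> S"
  and S_neg: "x \<in> S \<Longrightarrow> - x \<in> S" and S_smult: "x \<in> S \<Longrightarrow> smult r x \<in> S"
  using sub unfolding subalgebra_def by blast+

lemma S_diff: "x \<in> S \<Longrightarrow> y \<in> S \<Longrightarrow> x - y \<in> S"
  using S_add[of x "- y"] S_neg[of y] by simp

lemmas Sc = S_0 S_add S_mult S_neg S_smult S_diff

abbreviation Z where "Z \<equiv> center S"

lemma Z_iff: "z \<in> Z \<longleftrightarrow> z \<in> S \<and> (\<forall>x\<in>S. z * x = x * z)"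
  unfolding center_def by blast

lemma Z_S: "z \<in> Z \<Longrightarrow> z \<in> S" using Z_iff by blast
lemma Z_comm: "z \<in> Z \<Longrightarrow> x \<in> S \<Longrightarrow> z * x = x * z" using Z_iff by blast

lemma Z_0: "0 \<in> Z" using Z_iff S_0 by simp
lemma Z_add: "a \<in> Z \<Longrightarrow> b \<in> Z \<Longrightarrow> a + b \<in> Z"
  unfolding Z_iff using S_add by (simp add: distrib_left distrib_right)
lemma Z_neg: "a \<in> Z \<Longrightarrow> - a \<in> Z"
  using Z_iff S_neg by simp
lemma Z_diff: "a \<in> Z \<Longrightarrow> b \<in> Z \<Longrightarrow> a - b \<in> Z"
  using Z_add[of a "- b"] Z_neg[of b] by simp
lemma Z_smult: "a \<in> Z \<Longrightarrow> smult r a \<in> Z"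
  unfolding Z_iff using S_smult af(4,5) by metis

definition cs :: "'a \<Rightarrow> 'a set" where "cs x = (\<lambda>z. x + z) ` Z"

lemma cs_self: "x \<in> cs x" unfolding cs_def using Z_0 by force

lemma cs_eq: assumes "x \<in> S" "y \<in> S" shows "cs x = cs y \<longleftrightarrow> x - y \<in> Z"
proof
  assume "cs x = cs y"
  then have "x \<in> cs y" using cs_self[of x] by simp
  then obtain z where "z \<in> Z" "x = y + z" unfolding cs_def by auto
  then show "x - y \<in> Z" by simp
next
  assume d: "x - y \<in> Z"
  show "cs x = cs y" unfolding cs_def
  proof (intro set_eqI iffI)
    fix w assume "w \<in> (\<lambda>z. x + z) ` Z"
    then obtain z where z: "z \<in> Z" "w = x + z" by auto
    then have "w = y + ((x - y) + z)" by simp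
    moreover have "(x - y) + z \<in> Z" using Z_add d z by simp
    ultimately show "w \<in> (\<lambda>z. y + z) ` Z" by blast
  next
    fix w assume "w \<in> (\<lambda>z. y + z) ` Z"
    then obtain z where z: "z \<in> Z" "w = y + z" by auto
    then have "w = x + (z - (x - y))" by simp
    moreover have "z - (x - y) \<in> Z" using Z_diff d z by simp
    ultimately show "w \<in> (\<lambda>z. x + z) ` Z" by blast
  qed
qed

lemma rep_cs: assumes "x \<in> S" obtains z where "z \<in> Z" "rep (cs x) = x + z"
proof -
  have "rep (cs x) \<in> cs x" unfolding rep_def using cs_self by (rule someI)
  then show ?thesis using that unfolding cs_def by auto
qed

lemma rep_cs_S: "x \<in> S \<Longrightarrow> rep (cs x) \<in> S"
  using rep_cs[of x] S_add Z_S by metis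

lemma cs_rep: assumes "x \<in> S" shows "cs (rep (cs x)) = cs x"
proof -
  obtain z where "z \<in> Z" "rep (cs x) = x + z" using rep_cs assms by blast
  moreover have "x + z \<in> S" using S_add Z_S assms \<open>z \<in> Z\<close> by blast
  ultimately show ?thesis using cs_eq[of "x + z" x] assms by simp
qed

abbreviation M where "M \<equiv> minus_mod_center smult S"

lemma M_simps: "lcar M = cs ` S" "lzero M = cs 0" "ladd M X Y = cs (rep X + rep Y)"
  "lsmult M r X = cs (smult r (rep X))" "lbr M X Y = cs (rep X * rep Y - rep Y * rep X)"
  by (simp_all add: minus_mod_center_def lie_quot_def lcoset_def minus_lie_def cs_def)

lemma M_add: assumes "x \<in> S" "y \<in> S" shows "ladd M (cs x) (cs y) = cs (x + y)"
proof -
  obtain z1 where z1: "z1 \<in> Z" "rep (cs x) = x + z1" using rep_cs assms by blast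
  obtain z2 where z2: "z2 \<in> Z" "rep (cs y) = y + z2" using rep_cs assms by blast
  have "(x + z1 + (y + z2)) - (x + y) = z1 + z2" by (simp add: algebra_simps)
  moreover have "x + z1 + (y + z2) \<in> S" "x + y \<in> S" using z1 z2 Z_S assms S_add by blast+
  ultimately show ?thesis unfolding M_simps z1(2) z2(2) using cs_eq Z_add z1 z2 by simp
qed

lemma M_smult: assumes "x \<in> S" shows "lsmult M r (cs x) = cs (smult r x)"
proof -
  obtain z1 where z1: "z1 \<in> Z" "rep (cs x) = x + z1" using rep_cs assms by blast
  have "smult r (x + z1) - smult r x = smult r z1" by (simp add: af)
  moreover have "smult r (x + z1) \<in> S" "smult r x \<in> S" using z1 Z_S assms S_add S_smult by blast+
  ultimately show ?thesis unfolding M_simps z1(2) using cs_eq Z_smult z1 by simp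
qed

lemma M_br: assumes "x \<in> S" "y \<in> S" shows "lbr M (cs x) (cs y) = cs (x * y - y * x)"
proof -
  obtain z1 where z1: "z1 \<in> Z" "rep (cs x) = x + z1" using rep_cs assms by blast
  obtain z2 where z2: "z2 \<in> Z" "rep (cs y) = y + z2" using rep_cs assms by blast
  have c1: "z1 * y = y * z1" "x * z2 = z2 * x" "z1 * z2 = z2 * z1"
    using Z_comm[of z1 y] Z_comm[of z2 x] Z_comm[of z1 z2] z1 z2 assms Z_S by auto
  have "(x + z1) * (y + z2) - (y + z2) * (x + z1) = x * y - y * x"
    by (simp add: algebra_simps c1)
  then show ?thesis unfolding M_simps z1 z2 by simp
qed


lemma ball_cs: "(\<forall>X\<in>cs ` S. P X) \<longleftrightarrow> (\<forall>x\<in>S. P (cs x))" by blast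
lemma bex_cs: "(\<exists>X\<in>cs ` S. P X) \<longleftrightarrow> (\<exists>x\<in>S. P (cs x))" by blast

lemma cs_in: "x \<in> S \<Longrightarrow> cs x \<in> cs ` S" by blast

lemma M_lie: "lie_algebra M"
  unfolding lie_algebra_def Let_def M_simps(1,2) ball_cs
  apply (intro conjI ballI allI)
  apply (simp_all add: M_add M_smult M_br Sc cs_in bex_cs af(1,2,3,6,7,8,9) af(4,5)[symmetric])
  prefer 3
  apply (metis add.right_inverse S_neg)
  apply (intro arg_cong[where f=cs]; simp add: algebra_simps)+
  done


lemma herstein:
  assumes tf: "\<And>x. x \<in> S \<Longrightarrow> x + x = 0 \<Longrightarrow> x = 0"
    and sp: "\<And>q. q \<in> S \<Longrightarrow> (\<And>s. s \<in> S \<Longrightarrow> q * s * q = 0) \<Longrightarrow> q = 0"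
    and u: "u \<in> S" and h: "\<And>x. x \<in> S \<Longrightarrow> u * (u * x - x * u) - (u * x - x * u) * u \<in> Z"
  shows "u \<in> Z"
proof -
  define d where "d x = u * x - x * u" for x
  have dS: "d x \<in> S" if "x \<in> S" for x unfolding d_def using that u by (simp add: Sc)
  have dmul: "d (x * y) = d x * y + x * d y" for x y unfolding d_def by (simp add: algebra_simps)
  have dadd: "d (x + y) = d x + d y" for x y unfolding d_def by (simp add: algebra_simps)
  have du: "d u = 0" unfolding d_def by simp
  have h': "d (d x) \<in> Z" if "x \<in> S" for x using h[OF that] unfolding d_def .
  have dd0: "d (d x) = 0" if x: "x \<in> S" for x
  proof -
    define z where "z = d (d x)"
    have zZ: "z \<in> Z" unfolding z_def using h' x .
    have "d (d (x * u)) = z * u" unfolding z_def using dmul du by simp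
    moreover have "x * u \<in> S" using x u Sc by blast
    ultimately have zuZ: "z * u \<in> Z" using h' by metis
    have zd: "z * d y = 0" if y: "y \<in> S" for y
    proof -
      have "z * d y = (z * u) * y - (z * y) * u" unfolding d_def by (simp add: algebra_simps)
      also have "z * y = y * z" using Z_comm zZ y by blast
      also have "(z * u) * y = y * (z * u)" using Z_comm zuZ y by blast
      finally show ?thesis by (simp add: mult.assoc)
    qed
    have zz: "z * z = 0" using zd[of "d x"] dS x unfolding z_def by simp
    have "z * s * z = 0" if "s \<in> S" for s
    proof -
      have "z * s * z = z * (s * z)" by (simp add: mult.assoc)
      also have "s * z = z * s" using Z_comm zZ that by metis
      finally show ?thesis using zz by (simp add: mult.assoc[symmetric])
    qed
    then have "z = 0" using sp[of z] zZ Z_S by blast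
    then show ?thesis unfolding z_def .
  qed
  have pp: "d x * d y = 0" if "x \<in> S" "y \<in> S" for x y
  proof -
    have "d (d (x * y)) = d (d x) * y + d x * d y + (d x * d y + x * d (d y))"
      by (simp add: dmul dadd add.assoc)
    then have "d x * d y + d x * d y = 0" using dd0 that Sc by (simp add: algebra_simps)
    moreover have "d x * d y \<in> S" using that dS by (simp add: Sc)
    ultimately show ?thesis using tf by blast
  qed
  have "d x = 0" if x: "x \<in> S" for x
  proof (rule sp)
    show "d x \<in> S" using dS x .
    fix s assume s: "s \<in> S"
    have "d x * d (s * x) = d x * d s * x + d x * s * d x" by (simp add: dmul algebra_simps)
    then show "d x * s * d x = 0" using pp x s Sc dS by simp
  qed
  then show ?thesis unfolding Z_iff d_def using u by simp
qed

lemma M_semiprime: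
  assumes tf: "\<And>x. x \<in> S \<Longrightarrow> x + x = 0 \<Longrightarrow> x = 0"
    and sp: "\<And>q. q \<in> S \<Longrightarrow> (\<And>s. s \<in> S \<Longrightarrow> q * s * q = 0) \<Longrightarrow> q = 0"
  shows "lie_semiprime M"
  unfolding lie_semiprime_def
proof (intro allI impI)
  fix I assume a: "lie_ideal M I \<and> I \<noteq> {lzero M}"
  then have sub: "I \<subseteq> cs ` S" and z: "cs 0 \<in> I"
    and br: "\<And>X Y. X \<in> cs ` S \<Longrightarrow> Y \<in> I \<Longrightarrow> lbr M X Y \<in> I"
    unfolding lie_ideal_def M_simps(1,2) by blast+
  obtain X where X: "X \<in> I" "X \<noteq> cs 0" using a z unfolding M_simps by blast
  then obtain u where u: "u \<in> S" "X = cs u" using sub by blast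
  show "\<exists>x\<in>I. \<exists>y\<in>I. lbr M x y \<noteq> lzero M"
  proof (rule ccontr)
    assume "\<not> ?thesis"
    then have all0: "\<And>X Y. X \<in> I \<Longrightarrow> Y \<in> I \<Longrightarrow> lbr M X Y = cs 0" unfolding M_simps by blast
    have "u * (u * x - x * u) - (u * x - x * u) * u \<in> Z" if x: "x \<in> S" for x
    proof -
      have "lbr M (cs x) (cs u) \<in> I" using br x X u by blast
      then have i: "cs (x * u - u * x) \<in> I" using M_br x u by simp
      have "lbr M (cs u) (cs (x * u - u * x)) = cs 0" using all0 i X u by blast
      then have "cs (u * (x * u - u * x) - (x * u - u * x) * u) = cs 0"
        using M_br u x Sc by simp
      moreover have "u * (x * u - u * x) - (x * u - u * x) * u \<in> S" using u x by (simp add: Sc)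
      ultimately have "u * (x * u - u * x) - (x * u - u * x) * u - 0 \<in> Z"
        using cs_eq S_0 by blast
      then have "- (u * (x * u - u * x) - (x * u - u * x) * u) \<in> Z" using Z_neg by (simp only: diff_zero)
      moreover have "- (u * (x * u - u * x) - (x * u - u * x) * u) =
          u * (u * x - x * u) - (u * x - x * u) * u" by (simp add: algebra_simps)
      ultimately show ?thesis by simp
    qed
    then have "u \<in> Z" using herstein tf sp u by blast
    then have "cs u = cs 0" using cs_eq u S_0 by simp
    then show False using X u by simp
  qed
qed

end



lemma alg_idealI:
  assumes "I \<subseteq> A" "0 \<in> I" "\<And>x y. x \<in> I \<Longrightarrow> y \<in> I \<Longrightarrow> x + y \<in> I"
    "\<And>x. x \<in> I \<Longrightarrow> - x \<in> I" "\<And>r x. x \<in> I \<Longrightarrow> smult r x \<in> I"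
    "\<And>a x. a \<in> A \<Longrightarrow> x \<in> I \<Longrightarrow> a * x \<in> I" "\<And>a x. a \<in> A \<Longrightarrow> x \<in> I \<Longrightarrow> x * a \<in> I"
  shows "alg_ideal smult A I"
  unfolding alg_ideal_def by (intro conjI ballI allI assms)

lemma alg_idealD:
  assumes "alg_ideal smult A I"
  shows "I \<subseteq> A" "0 \<in> I" "\<And>x y. x \<in> I \<Longrightarrow> y \<in> I \<Longrightarrow> x + y \<in> I"
    "\<And>x. x \<in> I \<Longrightarrow> - x \<in> I" "\<And>r x. x \<in> I \<Longrightarrow> smult r x \<in> I"
    "\<And>a x. a \<in> A \<Longrightarrow> x \<in> I \<Longrightarrow> a * x \<in> I" "\<And>a x. a \<in> A \<Longrightarrow> x \<in> I \<Longrightarrow> x * a \<in> I"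
  using assms unfolding alg_ideal_def by auto

locale qsetting =
  fixes smult :: "'r::comm_ring_1 \<Rightarrow> 'a::ring \<Rightarrow> 'a" and A U Q :: "'a set"
  assumes alg: "is_algebra smult"
    and subA: "subalgebra smult A"
    and semi: "semiprime_alg smult A"
    and tfA: "two_torsion_free A"
    and qmax: "is_Qmax_left smult A U"
    and subQ: "subalgebra smult Q"
    and AQ: "A \<subseteq> Q"
    and QQs: "Q \<subseteq> Qs smult A U"
begin

sublocale SA: salg smult A using alg subA by unfold_locales
sublocale SQ: salg smult Q using alg subQ by unfold_locales

lemmas af = alg_facts[OF alg]

lemma ideal_zero:
  assumes "alg_ideal smult A I" "\<And>x y. x \<in> I \<Longrightarrow> y \<in> I \<Longrightarrow> x * y = 0"
  shows "I = {0}"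
  using semi assms unfolding semiprime_alg_def by blast

lemma ideal_inter:
  assumes I: "alg_ideal smult A I" and J: "alg_ideal smult A J"
  shows "alg_ideal smult A (I \<inter> J)"
proof -
  note D1 = alg_idealD[OF I] and D2 = alg_idealD[OF J]
  show ?thesis
  proof (rule alg_idealI)
    show "I \<inter> J \<subseteq> A" using D1(1) by blast
    show "0 \<in> I \<inter> J" using D1(2) D2(2) by blast
    show "x + y \<in> I \<inter> J" if "x \<in> I \<inter> J" "y \<in> I \<inter> J" for x y
      using that D1(3) D2(3) by simp
    show "- x \<in> I \<inter> J" if "x \<in> I \<inter> J" for x
      using that D1(4) D2(4) by simp
    show "smult r x \<in> I \<inter> J" if "x \<in> I \<inter> J" for r x
      using that D1(5) D2(5) by simp
    show "a * x \<in> I \<inter> J" if "a \<in> A" "x \<in> I \<inter> J" for a x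
      using that D1(6) D2(6) by simp
    show "x * a \<in> I \<inter> J" if "a \<in> A" "x \<in> I \<inter> J" for a x
      using that D1(7) D2(7) by simp
  qed
qed

lemma lann_ideal:
  assumes I: "alg_ideal smult A I"
  shows "alg_ideal smult A {y \<in> A. \<forall>x\<in>I. y * x = 0}"
proof (rule alg_idealI)
  note D = alg_idealD[OF I]
  show "{y \<in> A. \<forall>x\<in>I. y * x = 0} \<subseteq> A" by blast
  show "0 \<in> {y \<in> A. \<forall>x\<in>I. y * x = 0}" using SA.S_0 by simp
  show "x + y \<in> {y \<in> A. \<forall>x\<in>I. y * x = 0}" if "x \<in> {y \<in> A. \<forall>x\<in>I. y * x = 0}" "y \<in> {y \<in> A. \<forall>x\<in>I. y * x = 0}" for x y
    using that SA.S_add by (simp add: distrib_right)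
  show "- x \<in> {y \<in> A. \<forall>x\<in>I. y * x = 0}" if "x \<in> {y \<in> A. \<forall>x\<in>I. y * x = 0}" for x
    using that SA.S_neg by simp
  show "smult r x \<in> {y \<in> A. \<forall>x\<in>I. y * x = 0}" if "x \<in> {y \<in> A. \<forall>x\<in>I. y * x = 0}" for r x
    using that SA.S_smult by (simp add: af(4)[symmetric] af(1))
  show "a * x \<in> {y \<in> A. \<forall>x\<in>I. y * x = 0}" if "a \<in> A" "x \<in> {y \<in> A. \<forall>x\<in>I. y * x = 0}" for a x
    using that SA.S_mult by (simp add: mult.assoc)
  show "x * a \<in> {y \<in> A. \<forall>x\<in>I. y * x = 0}" if "a \<in> A" "x \<in> {y \<in> A. \<forall>x\<in>I. y * x = 0}" for a x
    using that SA.S_mult D(6) by (simp add: mult.assoc)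
qed

lemma rann_ideal:
  assumes I: "alg_ideal smult A I"
  shows "alg_ideal smult A {y \<in> A. \<forall>x\<in>I. x * y = 0}"
proof (rule alg_idealI)
  note D = alg_idealD[OF I]
  show "{y \<in> A. \<forall>x\<in>I. x * y = 0} \<subseteq> A" by blast
  show "0 \<in> {y \<in> A. \<forall>x\<in>I. x * y = 0}" using SA.S_0 by simp
  show "x + y \<in> {y \<in> A. \<forall>x\<in>I. x * y = 0}" if "x \<in> {y \<in> A. \<forall>x\<in>I. x * y = 0}" "y \<in> {y \<in> A. \<forall>x\<in>I. x * y = 0}" for x y
    using that SA.S_add by (simp add: distrib_left)
  show "- x \<in> {y \<in> A. \<forall>x\<in>I. x * y = 0}" if "x \<in> {y \<in> A. \<forall>x\<in>I. x * y = 0}" for x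
    using that SA.S_neg by simp
  show "smult r x \<in> {y \<in> A. \<forall>x\<in>I. x * y = 0}" if "x \<in> {y \<in> A. \<forall>x\<in>I. x * y = 0}" for r x
    using that SA.S_smult by (simp add: af(5)[symmetric] af(1))
  show "a * x \<in> {y \<in> A. \<forall>x\<in>I. x * y = 0}" if "a \<in> A" "x \<in> {y \<in> A. \<forall>x\<in>I. x * y = 0}" for a x
    using that SA.S_mult D(7) by (simp add: mult.assoc[symmetric])
  show "x * a \<in> {y \<in> A. \<forall>x\<in>I. x * y = 0}" if "a \<in> A" "x \<in> {y \<in> A. \<forall>x\<in>I. x * y = 0}" for a x
    using that SA.S_mult by (simp add: mult.assoc[symmetric])
qed

lemma ess_ann_zero:
  assumes E: "essential_ideal smult A I" and J: "alg_ideal smult A J"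
    and sq: "\<And>x y. x \<in> I \<inter> J \<Longrightarrow> y \<in> I \<inter> J \<Longrightarrow> x * y = 0"
  shows "J = {0}"
proof -
  have I: "alg_ideal smult A I" using E unfolding essential_ideal_def by blast
  have "I \<inter> J = {0}" using ideal_zero[OF ideal_inter[OF I J]] sq by blast
  then show ?thesis using E J unfolding essential_ideal_def by blast
qed

lemma ess_lann:
  assumes E: "essential_ideal smult A I" and y: "y \<in> A" and h: "\<And>x. x \<in> I \<Longrightarrow> y * x = 0"
  shows "y = 0"
proof -
  have I: "alg_ideal smult A I" using E unfolding essential_ideal_def by blast
  have "{y \<in> A. \<forall>x\<in>I. y * x = 0} = {0}"
    by (rule ess_ann_zero[OF E lann_ideal[OF I]]) blast
  then show ?thesis using y h by blast
qed

lemma ess_rann: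
  assumes E: "essential_ideal smult A I" and y: "y \<in> A" and h: "\<And>x. x \<in> I \<Longrightarrow> x * y = 0"
  shows "y = 0"
proof -
  have I: "alg_ideal smult A I" using E unfolding essential_ideal_def by blast
  have "{y \<in> A. \<forall>x\<in>I. x * y = 0} = {0}"
    by (rule ess_ann_zero[OF E rann_ideal[OF I]]) blast
  then show ?thesis using y h by blast
qed

lemma ess_dense:
  assumes E: "essential_ideal smult A I"
  shows "dense_left_ideal smult A I"
proof -
  have I: "alg_ideal smult A I" using E unfolding essential_ideal_def by blast
  note D = alg_idealD[OF I]
  have "left_ideal smult A I" unfolding left_ideal_def
    using D(1,2) by (intro conjI ballI allI D(3,4,5,6)) auto
  moreover have "\<exists>a\<in>A. a * p \<noteq> 0 \<and> a * q \<in> I" if "p \<in> A" "q \<in> A" "p \<noteq> 0" for p q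
  proof -
    obtain x where "x \<in> I" "x * p \<noteq> 0" using ess_rann[OF E \<open>p \<in> A\<close>] \<open>p \<noteq> 0\<close> by blast
    moreover have "x \<in> A" using D(1) \<open>x \<in> I\<close> by (rule subsetD)
    moreover have "x * q \<in> I" using D(7) \<open>q \<in> A\<close> \<open>x \<in> I\<close> .
    ultimately show ?thesis by (intro bexI[of _ x]) auto
  qed
  ultimately show ?thesis unfolding dense_left_ideal_def by (intro conjI ballI impI) auto
qed

lemma sp_A:
  assumes a: "a \<in> A" and h: "\<And>s. s \<in> A \<Longrightarrow> a * s * a = 0"
  shows "a = 0"
proof -
  define R where "R = {y \<in> A. \<forall>s\<in>A. a * s * y = 0 \<and> a * y = 0}"
  have R: "alg_ideal smult A R"
  proof (rule alg_idealI)
    show "R \<subseteq> A" unfolding R_def by blast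
    show "0 \<in> R" unfolding R_def using SA.S_0 by simp
    show "x + y \<in> R" if "x \<in> R" "y \<in> R" for x y
      using that SA.S_add unfolding R_def by (simp add: distrib_left)
    show "- x \<in> R" if "x \<in> R" for x
      using that SA.S_neg unfolding R_def by simp
    show "smult r x \<in> R" if "x \<in> R" for r x
      using that SA.S_smult unfolding R_def by (simp add: af(5)[symmetric] af(1))
    show "b * x \<in> R" if "b \<in> A" "x \<in> R" for b x
    proof -
      have x: "x \<in> A" "\<And>s. s \<in> A \<Longrightarrow> a * s * x = 0" "a * x = 0" using \<open>x \<in> R\<close> unfolding R_def by auto
      have "a * s * (b * x) = 0" if "s \<in> A" for s
      proof -
        have "a * s * (b * x) = a * (s * b) * x" by (simp add: mult.assoc)
        also have "\<dots> = 0" using x(2) SA.S_mult[OF that \<open>b \<in> A\<close>] .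
        finally show ?thesis .
      qed
      moreover have "a * (b * x) = 0" using x(2)[OF \<open>b \<in> A\<close>] by (simp add: mult.assoc)
      moreover have "b * x \<in> A" using SA.S_mult \<open>b \<in> A\<close> x(1) .
      ultimately show ?thesis unfolding R_def by simp
    qed
    show "x * b \<in> R" if "b \<in> A" "x \<in> R" for b x
      using that SA.S_mult unfolding R_def by (simp add: mult.assoc[symmetric])
  qed
  define L where "L = {y \<in> A. \<forall>x\<in>R. y * x = 0}"
  have L: "alg_ideal smult A L" unfolding L_def by (rule lann_ideal[OF R])
  have "R \<inter> L = {0}"
    by (rule ideal_zero[OF ideal_inter[OF R L]]) (auto simp: L_def)
  moreover have "t * a \<in> R \<inter> L" if t: "t \<in> A" for t
  proof -
    have "a * s * (t * a) = 0" if "s \<in> A" for s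
    proof -
      have "a * s * (t * a) = a * (s * t) * a" by (simp add: mult.assoc)
      then show ?thesis using h SA.S_mult[OF that t] by simp
    qed
    moreover have "a * (t * a) = 0" using h[OF t] by (simp add: mult.assoc)
    ultimately have "t * a \<in> R" unfolding R_def using t a SA.S_mult by simp
    moreover have "t * a \<in> L" unfolding L_def R_def using t a SA.S_mult by (simp add: mult.assoc)
    ultimately show ?thesis by blast
  qed
  ultimately have ta: "\<And>t. t \<in> A \<Longrightarrow> t * a = 0" by (metis singletonD)
  have AA: "alg_ideal smult A A" using SA.Sc by (intro alg_idealI) auto
  have "{y \<in> A. \<forall>x\<in>A. x * y = 0} = {0}"
    by (rule ideal_zero[OF rann_ideal[OF AA]]) auto
  moreover have "a \<in> {y \<in> A. \<forall>x\<in>A. x * y = 0}" using a ta by simp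
  ultimately show ?thesis by simp
qed

end



context salg begin

lemma comm_step:
  assumes tf: "\<And>x. x \<in> S \<Longrightarrow> x + x = 0 \<Longrightarrow> x = 0"
    and sp: "\<And>q. q \<in> S \<Longrightarrow> (\<And>s. s \<in> S \<Longrightarrow> q * s * q = 0) \<Longrightarrow> q = 0"
    and a: "a \<in> S" and IS: "\<And>y. y \<in> I \<Longrightarrow> y \<in> S" and Isq: "\<And>y. y \<in> I \<Longrightarrow> y * y \<in> I"
    and h: "\<And>y. y \<in> I \<Longrightarrow> a * y - y * a \<in> Z"
    and y: "y \<in> I"
  shows "a * y = y * a"
proof -
  define c where "c = a * y - y * a"
  have yS: "y \<in> S" using IS y .
  have cZ: "c \<in> Z" unfolding c_def using h y .
  have "a * (y * y) - (y * y) * a = c * y + y * c" unfolding c_def by (simp add: algebra_simps)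
  also have "y * c = c * y" using Z_comm[OF cZ yS] by simp
  finally have e: "a * (y * y) - (y * y) * a = c * y + c * y" .
  have c2Z: "c * y + c * y \<in> Z" using h[OF Isq[OF y]] unfolding e .
  have cw: "c * (y * w - w * y) = 0" if w: "w \<in> S" for w
  proof -
    have "(c * y + c * y) * w = w * (c * y + c * y)" using Z_comm[OF c2Z w] .
    moreover have "w * c = c * w" using Z_comm[OF cZ w] by simp
    ultimately have "c * y * w + c * y * w = c * w * y + c * w * y"
      by (simp add: distrib_left distrib_right mult.assoc[symmetric])
    moreover have "c * (y * w - w * y) + c * (y * w - w * y) = (c * y * w + c * y * w) - (c * w * y + c * w * y)"
      by (simp add: algebra_simps)
    ultimately have "c * (y * w - w * y) + c * (y * w - w * y) = 0" by simp
    moreover have "c * (y * w - w * y) \<in> S" using Z_S[OF cZ] yS w by (simp add: Sc)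
    ultimately show ?thesis using tf by blast
  qed
  have "c * (y * a - a * y) = - (c * c)" unfolding c_def by (simp add: algebra_simps)
  then have cc: "c * c = 0" using cw[OF a] by simp
  have "c * s * c = 0" if s: "s \<in> S" for s
  proof -
    have "c * s * c = c * (s * c)" by (simp add: mult.assoc)
    also have "s * c = c * s" using Z_comm[OF cZ s] by simp
    finally show ?thesis using cc by (simp add: mult.assoc[symmetric])
  qed
  then have "c = 0" using sp Z_S[OF cZ] by blast
  then show ?thesis unfolding c_def by simp
qed

end

context qsetting begin

lemma qmax5: "q \<in> U \<Longrightarrow> dense_left_ideal smult A I \<Longrightarrow> (\<And>x. x \<in> I \<Longrightarrow> x * q = 0) \<Longrightarrow> q = 0"
  using qmax[unfolded is_Qmax_left_def, THEN conjunct2, THEN conjunct2, THEN conjunct2,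
      THEN conjunct2, THEN conjunct1] by blast

lemma Q_ess: assumes "q \<in> Q" obtains I where "essential_ideal smult A I" "\<And>x. x \<in> I \<Longrightarrow> x * q \<in> A"
  "\<And>x. x \<in> I \<Longrightarrow> q * x \<in> A"
  using assms QQs unfolding Qs_def by blast

lemma Q_U: "Q \<subseteq> U" using QQs unfolding Qs_def by blast

lemma Qleft: assumes "q \<in> Q" "essential_ideal smult A I" "\<And>x. x \<in> I \<Longrightarrow> x * q = 0"
  shows "q = 0"
  using qmax5[OF _ ess_dense[OF assms(2)]] assms(1,3) Q_U by blast

lemma ess_ideal: "essential_ideal smult A I \<Longrightarrow> alg_ideal smult A I"
  unfolding essential_ideal_def by blast

lemma Qright: assumes q: "q \<in> Q" and E: "essential_ideal smult A I" and h: "\<And>x. x \<in> I \<Longrightarrow> q * x = 0"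
  shows "q = 0"
proof -
  obtain J where J: "essential_ideal smult A J" "\<And>x. x \<in> J \<Longrightarrow> x * q \<in> A"
    using Q_ess[OF q] by blast
  have "y * q = 0" if "y \<in> J" for y
  proof (rule ess_lann[OF E])
    show "y * q \<in> A" using J(2) that .
    fix x assume "x \<in> I"
    then show "y * q * x = 0" using h by (simp add: mult.assoc)
  qed
  then show ?thesis using Qleft[OF q J(1)] by blast
qed

lemma tfA': "x \<in> A \<Longrightarrow> x + x = 0 \<Longrightarrow> x = 0"
  using tfA unfolding two_torsion_free_def by blast

lemma tf_Q: assumes q: "q \<in> Q" "q + q = 0" shows "q = 0"
proof -
  obtain I where I: "essential_ideal smult A I" "\<And>x. x \<in> I \<Longrightarrow> x * q \<in> A"
    using Q_ess[OF q(1)] by blast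
  have "x * q = 0" if "x \<in> I" for x
  proof (rule tfA')
    show "x * q \<in> A" using I(2) that .
    have "x * q + x * q = x * (q + q)" by (simp add: distrib_left)
    then show "x * q + x * q = 0" using q(2) by simp
  qed
  then show ?thesis using Qleft[OF q(1) I(1)] by blast
qed

lemma sp_Q: assumes q: "q \<in> Q" and h: "\<And>s. s \<in> Q \<Longrightarrow> q * s * q = 0" shows "q = 0"
proof -
  obtain I where I: "essential_ideal smult A I" "\<And>x. x \<in> I \<Longrightarrow> x * q \<in> A"
    using Q_ess[OF q] by blast
  have D: "I \<subseteq> A" using alg_idealD(1)[OF ess_ideal[OF I(1)]] .
  have "x * q = 0" if x: "x \<in> I" for x
  proof (rule sp_A)
    show "x * q \<in> A" using I(2) x .
    fix s assume s: "s \<in> A"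
    have "x * q * s * (x * q) = x * (q * (s * x) * q)" by (simp add: mult.assoc)
    moreover have "s * x \<in> Q" using s x D AQ SA.S_mult by blast
    ultimately show "x * q * s * (x * q) = 0" using h by simp
  qed
  then show ?thesis using Qleft[OF q I(1)] by blast
qed

lemma ZA_ZQ: assumes z: "z \<in> center A" shows "z \<in> center Q"
proof -
  have zA: "z \<in> A" using z SA.Z_S by blast
  have "z * q = q * z" if q: "q \<in> Q" for q
  proof -
    obtain I where I: "essential_ideal smult A I" "\<And>x. x \<in> I \<Longrightarrow> x * q \<in> A"
      using Q_ess[OF q] by blast
    have D: "I \<subseteq> A" using alg_idealD(1)[OF ess_ideal[OF I(1)]] .
    have "x * (z * q - q * z) = 0" if x: "x \<in> I" for x
    proof -
      have xA: "x \<in> A" using x D by blast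
      have xz: "x * z = z * x" using SA.Z_comm[OF z xA] by simp
      have "x * (z * q - q * z) = (x * z) * q - (x * q) * z" by (simp add: algebra_simps)
      also have "(x * z) * q = z * (x * q)" using xz by (simp add: mult.assoc[symmetric])
      also have "z * (x * q) = (x * q) * z" using SA.Z_comm[OF z I(2)[OF x]] .
      finally show ?thesis by simp
    qed
    moreover have "z \<in> Q" using zA AQ by blast
    then have "z * q - q * z \<in> Q" using q by (simp add: SQ.Sc)
    ultimately have "z * q - q * z = 0" using Qleft[OF _ I(1)] by blast
    then show ?thesis by simp
  qed
  then show ?thesis using zA AQ unfolding SQ.Z_iff by blast
qed

lemma ZQ_ZA: "z \<in> center Q \<Longrightarrow> z \<in> A \<Longrightarrow> z \<in> center A"
  unfolding SQ.Z_iff SA.Z_iff using AQ by blast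

lemma A_comm:
  assumes a: "a \<in> A" and E: "essential_ideal smult A I" and h: "\<And>y. y \<in> I \<Longrightarrow> a * y - y * a \<in> center A"
  shows "a \<in> center A"
proof -
  note D = alg_idealD[OF ess_ideal[OF E]]
  have IS: "\<And>y. y \<in> I \<Longrightarrow> y \<in> A" using D(1) by blast
  have Isq: "\<And>y. y \<in> I \<Longrightarrow> y * y \<in> I" using D(6) IS by blast
  have ay: "a * y = y * a" if "y \<in> I" for y
    by (rule SA.comm_step[OF tfA' sp_A a IS Isq h that])
  have "a * w - w * a = 0" if w: "w \<in> A" for w
  proof (rule ess_lann[OF E])
    show "a * w - w * a \<in> A" using a w by (simp add: SA.Sc)
    fix y assume y: "y \<in> I"
    have "(a * w - w * a) * y = a * (w * y) - w * (a * y)" by (simp add: algebra_simps)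
    also have "a * y = y * a" using ay y .
    also have "a * (w * y) = (w * y) * a" using ay D(6)[OF w y] .
    finally show "(a * w - w * a) * y = 0" by (simp add: mult.assoc)
  qed
  then show ?thesis unfolding SA.Z_iff using a by simp
qed

lemma Q_comm:
  assumes q: "q \<in> Q" and E: "essential_ideal smult A I" and h: "\<And>y. y \<in> I \<Longrightarrow> q * y - y * q \<in> center Q"
  shows "q \<in> center Q"
proof -
  note D = alg_idealD[OF ess_ideal[OF E]]
  have IQ: "y \<in> I \<Longrightarrow> y \<in> Q" for y using D(1) AQ by blast
  have IS: "\<And>y. y \<in> I \<Longrightarrow> y \<in> A" using D(1) by blast
  have Isq: "\<And>y. y \<in> I \<Longrightarrow> y * y \<in> I" using D(6) IS by blast
  have qy: "q * y = y * q" if "y \<in> I" for y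
    by (rule SQ.comm_step[OF tf_Q sp_Q q IQ Isq h that])
  have qwA: "q * w = w * q" if w: "w \<in> A" for w
  proof -
    have "q * w - w * q = 0"
    proof (rule Qright[OF _ E])
      have "w \<in> Q" using w AQ by blast
      then show "q * w - w * q \<in> Q" using q by (simp add: SQ.Sc)
      fix y assume y: "y \<in> I"
      have "(q * w - w * q) * y = q * (w * y) - w * (q * y)" by (simp add: algebra_simps)
      also have "q * y = y * q" using qy y .
      also have "q * (w * y) = (w * y) * q" using qy D(6)[OF w y] .
      finally show "(q * w - w * q) * y = 0" by (simp add: mult.assoc)
    qed
    then show ?thesis by simp
  qed
  have "q * w = w * q" if w: "w \<in> Q" for w
  proof -
    obtain J where J: "essential_ideal smult A J" "\<And>x. x \<in> J \<Longrightarrow> x * w \<in> A"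
      using Q_ess[OF w] by blast
    have DJ: "J \<subseteq> A" using alg_idealD(1)[OF ess_ideal[OF J(1)]] .
    have "q * w - w * q = 0"
    proof (rule Qleft[OF _ J(1)])
      show "q * w - w * q \<in> Q" using q w by (simp add: SQ.Sc)
      fix x assume x: "x \<in> J"
      have "x \<in> A" using x DJ by blast
      then have xq: "x * q = q * x" using qwA by simp
      have "x * (q * w - w * q) = (x * q) * w - (x * w) * q" by (simp add: algebra_simps)
      also have "x * q = q * x" by (rule xq)
      also have "(x * w) * q = q * (x * w)" using qwA[OF J(2)[OF x]] by simp
      finally show "x * (q * w - w * q) = 0" by (simp add: mult.assoc)
    qed
    then show ?thesis by simp
  qed
  then show ?thesis unfolding SQ.Z_iff using q by simp
qed

end



context qsetting begin

lemma nat_cs: assumes x: "x \<in> A" shows "natural_map smult Q (SA.cs x) = SQ.cs x"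
proof -
  obtain z where z: "z \<in> center A" "rep (SA.cs x) = x + z" using SA.rep_cs[OF x] by blast
  have zQ: "z \<in> center Q" using ZA_ZQ[OF z(1)] .
  have xQ: "x \<in> Q" using x AQ by blast
  have "natural_map smult Q (SA.cs x) = SQ.cs (x + z)"
    unfolding natural_map_def lcoset_def minus_lie_def SQ.cs_def z(2) by simp
  also have "\<dots> = SQ.cs x"
  proof -
    have "x + z \<in> Q" using xQ SQ.Z_S[OF zQ] by (simp add: SQ.Sc)
    moreover have "x + z - x \<in> center Q" using zQ by simp
    ultimately show ?thesis using SQ.cs_eq xQ by blast
  qed
  finally show ?thesis .
qed

lemma nat_inj: "inj_on (natural_map smult Q) (lcar SA.M)"
proof (rule inj_onI)
  fix X Y assume X: "X \<in> lcar SA.M" and Y: "Y \<in> lcar SA.M"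
    and e: "natural_map smult Q X = natural_map smult Q Y"
  obtain x where x: "x \<in> A" "X = SA.cs x" using X unfolding SA.M_simps by blast
  obtain y where y: "y \<in> A" "Y = SA.cs y" using Y unfolding SA.M_simps by blast
  have "SQ.cs x = SQ.cs y" using e nat_cs x y by simp
  moreover have "x \<in> Q" "y \<in> Q" using x y AQ by blast+
  ultimately have "x - y \<in> center Q" using SQ.cs_eq by blast
  moreover have "x - y \<in> A" using x y by (simp add: SA.Sc)
  ultimately have "x - y \<in> center A" using ZQ_ZA by blast
  then show "X = Y" using SA.cs_eq x y by simp
qed

lemma ideal_diff: assumes "alg_ideal smult A I" "x \<in> I" "y \<in> I" shows "x - y \<in> I"
  using alg_idealD(3)[OF assms(1) assms(2) alg_idealD(4)[OF assms(1) assms(3)]] by simp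

lemma nat_quot: "lie_algebra_of_quotients SA.M SQ.M (natural_map smult Q)"
  unfolding lie_algebra_of_quotients_def
proof (intro ballI impI)
  fix qb assume qb: "qb \<in> lcar SQ.M" "qb \<noteq> lzero SQ.M"
  obtain q where q: "q \<in> Q" "qb = SQ.cs q" using qb(1) unfolding SQ.M_simps by blast
  have qZ: "q \<notin> center Q"
  proof
    assume "q \<in> center Q"
    then have "SQ.cs q = SQ.cs 0" using SQ.cs_eq q(1) SQ.S_0 by simp
    then show False using qb(2) q(2) unfolding SQ.M_simps by simp
  qed
  obtain I where E: "essential_ideal smult A I" and Iq: "\<And>x. x \<in> I \<Longrightarrow> x * q \<in> A"
    and qI: "\<And>x. x \<in> I \<Longrightarrow> q * x \<in> A"
    using Q_ess[OF q(1)] by blast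
  have Id: "alg_ideal smult A I" using ess_ideal[OF E] .
  note D = alg_idealD[OF Id]
  have IA: "\<And>x. x \<in> I \<Longrightarrow> x \<in> A" using D(1) by blast
  show "\<exists>II. lie_ideal SA.M II \<and> lie_ann SA.M II = {lzero SA.M} \<and>
          (\<forall>x\<in>II. lbr SQ.M (natural_map smult Q x) qb \<in> natural_map smult Q ` lcar SA.M) \<and>
          (\<exists>x\<in>II. lbr SQ.M (natural_map smult Q x) qb \<noteq> lzero SQ.M)"
  proof (intro exI[of _ "SA.cs ` I"] conjI)
    show "lie_ideal SA.M (SA.cs ` I)"
      unfolding lie_ideal_def
    proof (intro conjI ballI allI)
      show "SA.cs ` I \<subseteq> lcar SA.M" unfolding SA.M_simps using D(1) by blast
      show "lzero SA.M \<in> SA.cs ` I" unfolding SA.M_simps using D(2) by blast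
      show "ladd SA.M X Y \<in> SA.cs ` I" if XY: "X \<in> SA.cs ` I" "Y \<in> SA.cs ` I" for X Y
      proof -
        obtain x y where "x \<in> I" "y \<in> I" "X = SA.cs x" "Y = SA.cs y" using XY by blast
        then show ?thesis using SA.M_add IA D(3) by simp
      qed
      show "lsmult SA.M r X \<in> SA.cs ` I" if XI: "X \<in> SA.cs ` I" for r X
      proof -
        obtain x where "x \<in> I" "X = SA.cs x" using XI by blast
        then show ?thesis using SA.M_smult IA D(5) by simp
      qed
      show "lbr SA.M X Y \<in> SA.cs ` I" if XY: "X \<in> lcar SA.M" "Y \<in> SA.cs ` I" for X Y
      proof -
        obtain x y where "x \<in> A" "y \<in> I" "X = SA.cs x" "Y = SA.cs y"
          using XY unfolding SA.M_simps by blast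
        moreover have "x * y - y * x \<in> I" using ideal_diff[OF Id] D(6,7) calculation by blast
        ultimately show ?thesis using SA.M_br IA by simp
      qed
    qed
    show "lie_ann SA.M (SA.cs ` I) = {lzero SA.M}"
    proof
      show "lie_ann SA.M (SA.cs ` I) \<subseteq> {lzero SA.M}"
      proof
        fix X assume X: "X \<in> lie_ann SA.M (SA.cs ` I)"
        then obtain a where a: "a \<in> A" "X = SA.cs a" unfolding lie_ann_def SA.M_simps by blast
        have "a * y - y * a \<in> center A" if y: "y \<in> I" for y
        proof -
          have "lbr SA.M X (SA.cs y) = lzero SA.M" using X y unfolding lie_ann_def by blast
          then have "SA.cs (a * y - y * a) = SA.cs 0" using SA.M_br a IA[OF y] unfolding SA.M_simps by simp
          moreover have "a * y - y * a \<in> A" using a IA[OF y] by (simp add: SA.Sc)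
          ultimately show ?thesis using SA.cs_eq SA.S_0 by fastforce
        qed
        then have "a \<in> center A" using A_comm[OF a(1) E] by blast
        then have "SA.cs a = SA.cs 0" using SA.cs_eq a SA.S_0 by simp
        then show "X \<in> {lzero SA.M}" using a unfolding SA.M_simps by simp
      qed
      show "{lzero SA.M} \<subseteq> lie_ann SA.M (SA.cs ` I)"
      proof -
        have "lbr SA.M (SA.cs 0) Y = SA.cs 0" if YI: "Y \<in> SA.cs ` I" for Y
        proof -
          obtain y where "y \<in> I" "Y = SA.cs y" using YI by blast
          then show ?thesis using SA.M_br[of 0 y] SA.S_0 IA by simp
        qed
        then show ?thesis unfolding lie_ann_def SA.M_simps using SA.S_0 by blast
      qed
    qed
    show "\<forall>x\<in>SA.cs ` I. lbr SQ.M (natural_map smult Q x) qb \<in> natural_map smult Q ` lcar SA.M"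
    proof
      fix X assume "X \<in> SA.cs ` I"
      then obtain x where x: "x \<in> I" "X = SA.cs x" by blast
      have xQ: "x \<in> Q" using IA[OF x(1)] AQ by blast
      have "lbr SQ.M (natural_map smult Q X) qb = SQ.cs (x * q - q * x)"
        using nat_cs IA x q SQ.M_br xQ by simp
      moreover have "x * q - q * x \<in> A" using Iq qI x by (simp add: SA.Sc)
      ultimately have "lbr SQ.M (natural_map smult Q X) qb = natural_map smult Q (SA.cs (x * q - q * x))"
        using nat_cs by simp
      moreover have "SA.cs (x * q - q * x) \<in> lcar SA.M" unfolding SA.M_simps
        using \<open>x * q - q * x \<in> A\<close> by blast
      ultimately show "lbr SQ.M (natural_map smult Q X) qb \<in> natural_map smult Q ` lcar SA.M" by simp
    qed
    show "\<exists>x\<in>SA.cs ` I. lbr SQ.M (natural_map smult Q x) qb \<noteq> lzero SQ.M"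
    proof (rule ccontr)
      assume "\<not> ?thesis"
      then have all: "\<And>X. X \<in> SA.cs ` I \<Longrightarrow> lbr SQ.M (natural_map smult Q X) qb = lzero SQ.M" by blast
      have "q * y - y * q \<in> center Q" if y: "y \<in> I" for y
      proof -
        have yQ: "y \<in> Q" using IA[OF y] AQ by blast
        have "lbr SQ.M (natural_map smult Q (SA.cs y)) qb = lzero SQ.M" using all y by blast
        then have "SQ.cs (y * q - q * y) = SQ.cs 0"
          using nat_cs IA[OF y] q SQ.M_br yQ unfolding SQ.M_simps(2) by simp
        moreover have "y * q - q * y \<in> Q" using yQ q by (simp add: SQ.Sc)
        ultimately have "y * q - q * y \<in> center Q" using SQ.cs_eq SQ.S_0 by fastforce
        then have "- (y * q - q * y) \<in> center Q" by (rule SQ.Z_neg)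
        then show ?thesis by simp
      qed
      then have "q \<in> center Q" using Q_comm[OF q(1) E] by blast
      then show False using qZ by simp
    qed
  qed
qed

end

theorem mainTheorem3:
  fixes smult :: "'r::comm_ring_1 \<Rightarrow> 'a::ring \<Rightarrow> 'a"
    and A U Q :: "'a set"
  assumes "is_algebra smult"
    and "subalgebra smult A"
    and "semiprime_alg smult A"
    and "two_torsion_free A"
    and "is_Qmax_left smult A U"
    and "subalgebra smult Q"
    and "A \<subseteq> Q"
    and "Q \<subseteq> Qs smult A U"
  shows "lie_algebra (minus_mod_center smult A) \<and> lie_semiprime (minus_mod_center smult A)
       \<and> lie_algebra (minus_mod_center smult Q) \<and> lie_semiprime (minus_mod_center smult Q)
       \<and> inj_on (natural_map smult Q) (lcar (minus_mod_center smult A))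
       \<and> lie_algebra_of_quotients (minus_mod_center smult A) (minus_mod_center smult Q)
            (natural_map smult Q)"
proof -
  interpret qsetting smult A U Q using assms by unfold_locales
  show ?thesis
    using SA.M_lie SQ.M_lie SA.M_semiprime[OF tfA' sp_A] SQ.M_semiprime[OF tf_Q sp_Q]
      nat_inj nat_quot by blast
qed


end
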